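(* Consider the multi-queue bandit described in the context, with any problem instance $(\boldsymbol\lambda,\boldsymbol\mu)$. For any scheduling policy, any queue $u\in[U]$ and any $t\ge1$, $$\Psi_u(t)\ge\lambda_u\sum_{k\ne k^*_u}\Delta_{uk}\,\mathbb{P}\left[\kappa_u(t)=k\right].$$
   Context: Discrete-time system with $U$ queues and $K$ servers, $1\le U\le K$. Arrivals $A_u(t)\in\{0,1\}$ to queue $u$ are Bernoulli($\lambda_u$), and the service $R_{uk}(t)\in\{0,1\}$ that server $k$ offers queue $u$ at time $t$ is Bernoulli($\mu_{uk}$); all mutually independent and i.i.d. across slots. In each slot a policy schedules a matching between queues and servers, based only on past observations (scheduled matchings, observed services, arrivals) and independent internal randomness. $\kappa_u(t)$ is the server assigned to queue $u$, $S_u(t)=R_{u\kappa_u(t)}(t)$ (0 if unassigned), $Q_u(t)=(Q_u(t-1)+A_u(t)-S_u(t))^+$. For each $u$, $\mu^*_u=\max_k\mu_{uk}$ is attained at a unique $k^*_u$, with $k^*_u\ne k^*_{u'}$ for $u\ne u'$, and $\lambda_u<\mu^*_u$. The genie queue $Q^*_u(t)=(Q^*_u(t-1)+A_u(t)-R_{uk^*_u}(t))^+$ uses the same arrivals. $Q_u(0)$ and $Q^*_u(0)$ are distributed according to the stationary distribution of $Q^*_u$. $\Psi_u(t)=\mathbb{E}[Q_u(t)-Q^*_u(t)]$ and $\Delta_{uk}=\mu^*_u-\mu_{uk}$. *)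

theory Defs
  imports "HOL-Probability.Probability"
begin

(* Queues are indexed by 0..U-1, servers by 0..K-1.
   A (partial) matching assigns to each queue at most one server, injectively. *)
type_synonym matching = "nat \<Rightarrow> nat option"

definition matchings :: "nat \<Rightarrow> nat \<Rightarrow> matching set" where
  "matchings U K = {\<kappa>. (\<forall>u k. \<kappa> u = Some k \<longrightarrow> u < U \<and> k < K) \<and>
                        (\<forall>u u' k. \<kappa> u = Some k \<longrightarrow> \<kappa> u' = Some k \<longrightarrow> u = u')}"

(* observation of one slot: scheduled matching, observed services S_u(t), arrivals A_u(t) *)
type_synonym obs = "matching \<times> (nat \<Rightarrow> bool) \<times> (nat \<Rightarrow> bool)"

(* a (randomized) policy maps the history of past observations to a distribution
   over matchings (this encodes the independent internal randomness) *)
type_synonym policy = "obs list \<Rightarrow> matching pmf"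

(* system state: history, queue lengths Q(t), genie queue lengths Q*(t) *)
type_synonym state = "obs list \<times> (nat \<Rightarrow> nat) \<times> (nat \<Rightarrow> nat)"

(* one slot of the genie queue Q* with arrival rate l and service rate m;
   nat subtraction realises (.)^+ *)
definition genie_step :: "real \<Rightarrow> real \<Rightarrow> nat \<Rightarrow> nat pmf" where
  "genie_step l m q =
     do { a \<leftarrow> bernoulli_pmf l; r \<leftarrow> bernoulli_pmf m;
          return_pmf (q + of_bool a - of_bool r) }"

definition stationary_genie :: "real \<Rightarrow> real \<Rightarrow> nat pmf \<Rightarrow> bool" where
  "stationary_genie l m \<pi> \<longleftrightarrow> bind_pmf \<pi> (genie_step l m) = \<pi>"

definition sys_step ::
  "nat \<Rightarrow> nat \<Rightarrow> (nat \<Rightarrow> real) \<Rightarrow> (nat \<Rightarrow> nat \<Rightarrow> real) \<Rightarrow> (nat \<Rightarrow> nat) \<Rightarrow> policy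
     \<Rightarrow> state \<Rightarrow> state pmf" where
  "sys_step U K lam mu kstar pol st =
     (case st of (h, q, qs) \<Rightarrow>
       do { \<kappa> \<leftarrow> pol h;
            A \<leftarrow> Pi_pmf {..<U} False (\<lambda>u. bernoulli_pmf (lam u));
            R \<leftarrow> Pi_pmf ({..<U} \<times> {..<K}) False (\<lambda>(u, k). bernoulli_pmf (mu u k));
            let S = (\<lambda>u. case \<kappa> u of None \<Rightarrow> False | Some k \<Rightarrow> R (u, k));
            return_pmf (h @ [(\<kappa>, S, A)],
                        \<lambda>u. q u + of_bool (A u) - of_bool (S u),
                        \<lambda>u. qs u + of_bool (A u) - of_bool (R (u, kstar u))) })"

primrec sys ::
  "nat \<Rightarrow> nat \<Rightarrow> (nat \<Rightarrow> real) \<Rightarrow> (nat \<Rightarrow> nat \<Rightarrow> real) \<Rightarrow> (nat \<Rightarrow> nat) \<Rightarrow> policy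
     \<Rightarrow> ((nat \<Rightarrow> nat) \<times> (nat \<Rightarrow> nat)) pmf \<Rightarrow> nat \<Rightarrow> state pmf" where
  "sys U K lam mu kstar pol init 0 = map_pmf (\<lambda>(q, qs). ([], q, qs)) init"
| "sys U K lam mu kstar pol init (Suc t) =
     bind_pmf (sys U K lam mu kstar pol init t) (sys_step U K lam mu kstar pol)"

definition Psi ::
  "nat \<Rightarrow> nat \<Rightarrow> (nat \<Rightarrow> real) \<Rightarrow> (nat \<Rightarrow> nat \<Rightarrow> real) \<Rightarrow> (nat \<Rightarrow> nat) \<Rightarrow> policy
     \<Rightarrow> ((nat \<Rightarrow> nat) \<times> (nat \<Rightarrow> nat)) pmf \<Rightarrow> nat \<Rightarrow> nat \<Rightarrow> real" where
  "Psi U K lam mu kstar pol init u t =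
     measure_pmf.expectation (sys U K lam mu kstar pol init t)
       (\<lambda>(h, q, qs). real (q u) - real (qs u))"

(* kappa_u(t): server assigned to queue u at slot t (t >= 1), read off the history *)
definition kappa :: "state \<Rightarrow> nat \<Rightarrow> nat option" where
  "kappa st u = fst (last (fst st)) u"

end

theory Submission
  imports Defs
begin


definition mrate :: "(nat \<Rightarrow> nat \<Rightarrow> real) \<Rightarrow> nat \<Rightarrow> matching \<Rightarrow> real" where
  "mrate mu u \<kappa> = (case \<kappa> u of None \<Rightarrow> 0 | Some k \<Rightarrow> mu u k)"

lemma bind2_marg:
  assumes "map_pmf fa PA = PA'" "map_pmf fb PB = PB'"
  shows "bind_pmf PA (\<lambda>A. bind_pmf PB (\<lambda>B. return_pmf (G (fa A) (fb B)))) =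
         bind_pmf PA' (\<lambda>a. bind_pmf PB' (\<lambda>b. return_pmf (G a b)))"
proof -
  have "bind_pmf PA' (\<lambda>a. bind_pmf PB' (\<lambda>b. return_pmf (G a b))) =
     bind_pmf (map_pmf fa PA) (\<lambda>a. bind_pmf (map_pmf fb PB) (\<lambda>b. return_pmf (G a b)))"
    using assms by simp
  also have "\<dots> = bind_pmf PA (\<lambda>A. bind_pmf PB (\<lambda>B. return_pmf (G (fa A) (fb B))))"
    by (simp add: bind_map_pmf)
  finally show ?thesis by simp
qed

lemma bern0: "bernoulli_pmf 0 = return_pmf False"
  by (rule pmf_eqI) (auto simp: pmf_return split: split_indicator)

lemma step_marg_q:
  assumes u: "u < U" and pol: "set_pmf (pol (fst st)) \<subseteq> matchings U K"
  shows "map_pmf (\<lambda>st'. (kappa st' u, fst (snd st') u)) (sys_step U K lam mu kstar pol st) =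
    bind_pmf (pol (fst st)) (\<lambda>\<kappa>. map_pmf (\<lambda>n. (\<kappa> u, n))
       (genie_step (lam u) (mrate mu u \<kappa>) (fst (snd st) u)))"
proof -
  obtain h q qs where st: "st = (h, q, qs)" by (cases st) auto
  let ?PA = "Pi_pmf {..<U} False (\<lambda>u. bernoulli_pmf (lam u))"
  let ?PR = "Pi_pmf ({..<U} \<times> {..<K}) False (\<lambda>(u, k). bernoulli_pmf (mu u k))"
  have "map_pmf (\<lambda>st'. (kappa st' u, fst (snd st') u)) (sys_step U K lam mu kstar pol st) =
     bind_pmf (pol h) (\<lambda>\<kappa>. bind_pmf ?PA (\<lambda>A. bind_pmf ?PR (\<lambda>R. return_pmf
        ((\<lambda>a r. (\<kappa> u, q u + of_bool a - of_bool r)) (A u) ((\<lambda>R. case \<kappa> u of None \<Rightarrow> False | Some k \<Rightarrow> R (u, k)) R)))))"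
    unfolding sys_step_def st by (simp add: map_bind_pmf kappa_def Let_def)
  also have "\<dots> = bind_pmf (pol h) (\<lambda>\<kappa>. map_pmf (\<lambda>n. (\<kappa> u, n))
       (genie_step (lam u) (mrate mu u \<kappa>) (q u)))"
  proof (rule bind_pmf_cong[OF refl])
    fix \<kappa> assume k: "\<kappa> \<in> set_pmf (pol h)"
    have A: "map_pmf (\<lambda>A. A u) ?PA = bernoulli_pmf (lam u)"
      using u by (simp add: Pi_pmf_component)
    have R: "map_pmf (\<lambda>R. case \<kappa> u of None \<Rightarrow> False | Some k \<Rightarrow> R (u, k)) ?PR = bernoulli_pmf (mrate mu u \<kappa>)"
    proof (cases "\<kappa> u")
      case None thus ?thesis by (simp add: mrate_def bern0)
    next
      case (Some k)
      with k pol st have "k < K" by (auto simp: matchings_def)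
      with Some u show ?thesis by (simp add: mrate_def Pi_pmf_component)
    qed
    show "bind_pmf ?PA (\<lambda>A. bind_pmf ?PR (\<lambda>R. return_pmf
        ((\<lambda>a r. (\<kappa> u, q u + of_bool a - of_bool r)) (A u) ((\<lambda>R. case \<kappa> u of None \<Rightarrow> False | Some k \<Rightarrow> R (u, k)) R)))) =
      map_pmf (\<lambda>n. (\<kappa> u, n)) (genie_step (lam u) (mrate mu u \<kappa>) (q u))"
      using bind2_marg[OF A R, of "\<lambda>a r. (\<kappa> u, q u + of_bool a - of_bool r)"]
      by (simp add: genie_step_def map_bind_pmf)
  qed
  finally show ?thesis by (simp add: st)
qed

lemma step_marg_qs:
  assumes u: "u < U" and ks: "kstar u < K"
  shows "map_pmf (\<lambda>st'. snd (snd st') u) (sys_step U K lam mu kstar pol st) =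
    genie_step (lam u) (mu u (kstar u)) (snd (snd st) u)"
proof -
  obtain h q qs where st: "st = (h, q, qs)" by (cases st) auto
  let ?PA = "Pi_pmf {..<U} False (\<lambda>u. bernoulli_pmf (lam u))"
  let ?PR = "Pi_pmf ({..<U} \<times> {..<K}) False (\<lambda>(u, k). bernoulli_pmf (mu u k))"
  have "map_pmf (\<lambda>st'. snd (snd st') u) (sys_step U K lam mu kstar pol st) =
     bind_pmf (pol h) (\<lambda>\<kappa>. bind_pmf ?PA (\<lambda>A. bind_pmf ?PR (\<lambda>R. return_pmf
        ((\<lambda>a r. qs u + of_bool a - of_bool r) (A u) ((\<lambda>R. R (u, kstar u)) R)))))"
    unfolding sys_step_def st by (simp add: map_bind_pmf Let_def)
  also have "\<dots> = genie_step (lam u) (mu u (kstar u)) (qs u)"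
  proof -
    have A: "map_pmf (\<lambda>A. A u) ?PA = bernoulli_pmf (lam u)"
      using u by (simp add: Pi_pmf_component)
    have R: "map_pmf (\<lambda>R. R (u, kstar u)) ?PR = bernoulli_pmf (mu u (kstar u))"
      using u ks by (simp add: Pi_pmf_component)
    show ?thesis using bind2_marg[OF A R, of "\<lambda>a r. qs u + of_bool a - of_bool r"]
      by (simp add: genie_step_def)
  qed
  finally show ?thesis by (simp add: st)
qed



lemma genie_nn:
  assumes "0 \<le> a" "a \<le> 1" "0 \<le> m" "m \<le> 1"
  shows "(\<integral>\<^sup>+ n. F n \<partial>genie_step a m q) =
     F (Suc q) * ennreal (a*(1-m)) + F q * ennreal (a*m + (1-a)*(1-m)) + F (q - 1) * ennreal ((1-a)*m)"
proof -
  have e1: "ennreal (a*(1-m)) = ennreal a * ennreal (1-m)" using assms by (simp add: ennreal_mult)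
  have e2: "ennreal (a*m + (1-a)*(1-m)) = ennreal a * ennreal m + ennreal (1-a) * ennreal (1-m)"
    using assms by (subst ennreal_plus) (auto simp: ennreal_mult)
  have e3: "ennreal ((1-a)*m) = ennreal (1-a) * ennreal m" using assms by (simp add: ennreal_mult)
  show ?thesis unfolding e1 e2 e3
    using assms by (simp add: genie_step_def distrib_left distrib_right mult_ac add_ac)
qed



lemma tail_pt:
  assumes a: "0 \<le> a" "a \<le> 1" and m: "0 \<le> m" "m \<le> \<mu>" "\<mu> \<le> 1"
  shows "(\<integral>\<^sup>+ n. of_bool (Suc i \<le> n) \<partial>genie_step a m q) \<ge>
     of_bool (i \<le> q) * ennreal (a*(1-\<mu>)) + of_bool (Suc i \<le> q) * ennreal (a*\<mu> + (1-a)*(1-\<mu>))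
     + of_bool (Suc (Suc i) \<le> q) * ennreal ((1-a)*\<mu>)"
proof -
  have m1: "m \<le> 1" using m by simp
  have "q < i \<or> q = i \<or> q = Suc i \<or> Suc (Suc i) \<le> q" by linarith
  moreover
  { assume "q = i"
    hence ?thesis unfolding genie_nn[OF a m(1) m1] using a m
      by (auto intro!: ennreal_leI mult_left_mono) }
  moreover
  { assume "q = Suc i"
    hence ?thesis unfolding genie_nn[OF a m(1) m1] using a m
      apply (simp add: ennreal_plus[symmetric] del: ennreal_plus)
    proof -
      have e1: "a*(1-\<mu>) + (a*\<mu> + (1-a)*(1-\<mu>)) = a + (1-a)*(1-\<mu>)" by (simp add: algebra_simps)
      have e2: "a*(1-m) + (a*m + (1-a)*(1-m)) = a + (1-a)*(1-m)" by (simp add: algebra_simps)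
      have "(1-a)*(1-\<mu>) \<le> (1-a)*(1-m)" using a m by (intro mult_left_mono) auto
      thus "a*(1-\<mu>) + (a*\<mu> + (1-a)*(1-\<mu>)) \<le> a*(1-m) + (a*m + (1-a)*(1-m))"
        unfolding e1 e2 by simp
    qed }
  moreover
  { assume qq: "Suc (Suc i) \<le> q"
    hence "Suc i \<le> q - 1" by simp
    with qq have ?thesis unfolding genie_nn[OF a m(1) m1] using a m
      apply (simp add: ennreal_plus[symmetric] del: ennreal_plus)
      by (simp add: algebra_simps) }
  ultimately show ?thesis unfolding genie_nn[OF a m(1) m1] by auto
qed

lemma tail_eq:
  assumes a: "0 \<le> a" "a \<le> 1" and m: "0 \<le> \<mu>" "\<mu> \<le> 1"
  shows "(\<integral>\<^sup>+ n. of_bool (Suc i \<le> n) \<partial>genie_step a \<mu> q) =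
     of_bool (i \<le> q) * ennreal (a*(1-\<mu>)) + of_bool (Suc i \<le> q) * ennreal (a*\<mu> + (1-a)*(1-\<mu>))
     + of_bool (Suc (Suc i) \<le> q) * ennreal ((1-a)*\<mu>)"
proof -
  have "q < i \<or> q = i \<or> q = Suc i \<or> Suc (Suc i) \<le> q" by linarith
  thus ?thesis unfolding genie_nn[OF a m] by auto
qed



definition cfun :: "real \<Rightarrow> real \<Rightarrow> nat \<Rightarrow> real" where
  "cfun a m q = real q + a*(1-m) - (if q = 0 then 0 else (1-a)*m)"

lemma mean_val:
  assumes a: "0 \<le> a" "a \<le> 1" and m: "0 \<le> m" "m \<le> 1"
  shows "(\<integral>\<^sup>+ n. ennreal (real n) \<partial>genie_step a m q) = ennreal (cfun a m q)"
proof (cases q)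
  case 0 thus ?thesis using a m by (simp add: genie_nn cfun_def)
next
  case (Suc q')
  have "(\<integral>\<^sup>+ n. ennreal (real n) \<partial>genie_step a m q) =
    ennreal (real (Suc q) * (a*(1-m)) + real q * (a*m + (1-a)*(1-m)) + real (q-1) * ((1-a)*m))"
    using a m by (simp add: genie_nn ennreal_mult[symmetric] ennreal_plus[symmetric] del: ennreal_plus)
  also have "real (Suc q) * (a*(1-m)) + real q * (a*m + (1-a)*(1-m)) + real (q-1) * ((1-a)*m) = cfun a m q"
    using Suc by (simp add: cfun_def algebra_simps)
  finally show ?thesis .
qed

lemma cfun_nonneg: "0 \<le> a \<Longrightarrow> a \<le> 1 \<Longrightarrow> 0 \<le> m \<Longrightarrow> m \<le> 1 \<Longrightarrow> 0 \<le> cfun a m q"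
  unfolding cfun_def using mult_left_le[of m a] mult_left_le[of m "1-a"] mult_nonneg_nonneg[of a "1-m"]
  by (auto simp: algebra_simps)

lemma cfun_le: assumes "0 \<le> a" "a \<le> 1" "0 \<le> m" "m \<le> 1" shows "cfun a m q \<le> real q + 1"
proof -
  have h: "0 \<le> a*m" "0 \<le> (1-a)*m" using assms by auto
  have e: "a*(1-m) = a - a*m" by (simp add: algebra_simps)
  show ?thesis unfolding cfun_def e using assms h by (simp split: if_split, linarith)
qed

lemma cfun_ge:
  assumes "0 \<le> a" "a \<le> 1" "0 \<le> m" "m \<le> \<mu>" "\<mu> \<le> 1"
  shows "cfun a m q \<ge> cfun a \<mu> q + a*(\<mu> - m)"
proof -
  have "(1-a)*m \<le> (1-a)*\<mu>" using assms by (intro mult_left_mono) auto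
  thus ?thesis unfolding cfun_def by (auto simp: algebra_simps)
qed

lemma cfun_split:
  assumes "0 \<le> a" "a \<le> 1" "0 \<le> \<mu>" "\<mu> \<le> 1"
  shows "ennreal (cfun a \<mu> q) = ennreal (a*(1-\<mu>)) + of_bool (1 \<le> q) * ennreal (1 - (1-a)*\<mu>)
     + ennreal (real (q - 1))"
proof (cases q)
  case 0 thus ?thesis by (simp add: cfun_def)
next
  case (Suc q')
  have "(1-a)*\<mu> \<le> 1" using assms mult_le_one[of "1-a" \<mu>] by auto
  moreover have "0 \<le> a*(1-\<mu>)" using assms by simp
  ultimately show ?thesis using Suc
    by (simp add: ennreal_plus[symmetric] cfun_def algebra_simps del: ennreal_plus)
qed



lemma real_eq_suminf: "ennreal (real n) = (\<Sum>i. of_bool (Suc i \<le> n) :: ennreal)"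
proof -
  have "(\<Sum>i. of_bool (Suc i \<le> n) :: ennreal) = (\<Sum>i\<in>{..<n}. of_bool (Suc i \<le> n))"
    by (rule suminf_finite) auto
  also have "\<dots> = (\<Sum>i\<in>{..<n}. 1)" by (rule sum.cong) auto
  finally show ?thesis by (simp add: ennreal_of_nat_eq_real_of_nat)
qed

lemma tailsum:
  fixes M :: "'a pmf" and f :: "'a \<Rightarrow> nat"
  shows "(\<integral>\<^sup>+x. ennreal (real (f x)) \<partial>M) = (\<Sum>i. \<integral>\<^sup>+x. of_bool (Suc i \<le> f x) \<partial>M)"
  unfolding real_eq_suminf by (rule nn_integral_suminf) simp

lemma ennreal_suminf_mono: "(\<And>i. f i \<le> g i) \<Longrightarrow> (\<Sum>i. f i :: ennreal) \<le> (\<Sum>i. g i)"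
  by (rule suminf_le) auto

lemma tail_int:
  fixes M :: "'a pmf" and f :: "'a \<Rightarrow> nat"
  shows "(\<integral>\<^sup>+x. of_bool (i \<le> f x) * c1 + of_bool (Suc i \<le> f x) * c2 + of_bool (Suc (Suc i) \<le> f x) * c3 \<partial>M)
     = (\<integral>\<^sup>+x. of_bool (i \<le> f x) \<partial>M) * c1 + (\<integral>\<^sup>+x. of_bool (Suc i \<le> f x) \<partial>M) * c2
       + (\<integral>\<^sup>+x. of_bool (Suc (Suc i) \<le> f x) \<partial>M) * c3"
  by (simp add: nn_integral_add nn_integral_multc)

lemma of_bool_prob:
  fixes M :: "'a pmf"
  shows "(\<integral>\<^sup>+x. of_bool (P x) \<partial>M) = ennreal (measure_pmf.prob M {x. P x})"
proof -
  have "(\<integral>\<^sup>+x. of_bool (P x) \<partial>M) = (\<integral>\<^sup>+x. indicator {x. P x} x \<partial>M)"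
    by (rule nn_integral_cong) (auto simp: indicator_def)
  also have "\<dots> = emeasure M {x. P x}" by simp
  finally show ?thesis by (simp add: measure_pmf.emeasure_eq_measure)
qed

lemma stat_tail:
  assumes a: "0 \<le> a" "a < \<mu>" "\<mu> \<le> 1" and st: "stationary_genie a \<mu> \<pi>"
  shows "measure_pmf.prob \<pi> {x. i \<le> x} = (a*(1-\<mu>)/((1-a)*\<mu>))^i"
proof -
  define P where "P i = measure_pmf.prob \<pi> {x. i \<le> x}" for i
  define c1 where "c1 = a*(1-\<mu>)"
  define c2 where "c2 = a*\<mu> + (1-a)*(1-\<mu>)"
  define c3 where "c3 = (1-a)*\<mu>"
  have a1: "a \<le> 1" "0 \<le> \<mu>" using a by auto
  have c1: "0 \<le> c1" using a unfolding c1_def by auto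
  have c2: "0 \<le> c2" using a unfolding c2_def by auto
  have c3: "0 < c3" using a unfolding c3_def by auto
  have csum: "c1 + c2 + c3 = 1" unfolding c1_def c2_def c3_def by (simp add: algebra_simps)
  have P0: "P 0 = 1"
  proof -
    have e: "{x::nat. 0 \<le> x} = UNIV" by auto
    show ?thesis unfolding P_def e using measure_pmf.prob_space[of \<pi>] by simp
  qed
  have Pnn: "0 \<le> P i" for i unfolding P_def by simp
  have eqn: "P (Suc i) = P i * c1 + P (Suc i) * c2 + P (Suc (Suc i)) * c3" for i
  proof -
    have "ennreal (P (Suc i)) = (\<integral>\<^sup>+x. of_bool (Suc i \<le> x) \<partial>\<pi>)"
      unfolding P_def of_bool_prob ..
    also have "\<dots> = (\<integral>\<^sup>+x. of_bool (Suc i \<le> x) \<partial>bind_pmf \<pi> (genie_step a \<mu>))"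
      using st unfolding stationary_genie_def by simp
    also have "\<dots> = (\<integral>\<^sup>+y. of_bool (i \<le> y) * ennreal c1 + of_bool (Suc i \<le> y) * ennreal c2
        + of_bool (Suc (Suc i) \<le> y) * ennreal c3 \<partial>\<pi>)"
      unfolding nn_integral_bind_pmf c1_def c2_def c3_def
      by (rule nn_integral_cong) (rule tail_eq[OF a(1) a1(1) a1(2) a(3)])
    also have "\<dots> = ennreal (P i * c1 + P (Suc i) * c2 + P (Suc (Suc i)) * c3)"
      unfolding tail_int of_bool_prob P_def using c1 c2 c3
      by (simp add: ennreal_mult[symmetric] ennreal_plus[symmetric] del: ennreal_plus)
    finally show ?thesis using c1 c2 c3 Pnn
      by (subst (asm) ennreal_inj) (auto intro!: add_nonneg_nonneg mult_nonneg_nonneg)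
  qed
  define d where "d = c3 * P 1 - c1 * P 0"
  have dconst: "c3 * P (Suc i) - c1 * P i = d" for i
  proof (induction i)
    case 0 thus ?case unfolding d_def by simp
  next
    case (Suc i)
    have "c3 * P (Suc (Suc i)) - c1 * P (Suc i) = c3 * P (Suc i) - c1 * P i"
    proof -
      have "P (Suc (Suc i)) * c3 = P (Suc i) - P i * c1 - P (Suc i) * c2" using eqn[of i] by linarith
      moreover have "c2 = 1 - c1 - c3" using csum by linarith
      ultimately show ?thesis by (simp add: algebra_simps)
    qed
    thus ?case using Suc by simp
  qed
  have lim: "P \<longlonglongrightarrow> 0"
  proof -
    have "(\<lambda>n. measure_pmf.prob \<pi> {x. n \<le> x}) \<longlonglongrightarrow> measure_pmf.prob \<pi> (\<Inter>n. {x. n \<le> x})"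
      by (rule measure_pmf.finite_Lim_measure_decseq) (auto simp: decseq_def)
    moreover have "(\<Inter>n. {x::nat. n \<le> x}) = {}" using Suc_n_not_le_n by blast
    ultimately show ?thesis unfolding P_def by simp
  qed
  have "(\<lambda>i. c3 * P (Suc i) - c1 * P i) \<longlonglongrightarrow> c3 * 0 - c1 * 0"
    by (intro tendsto_intros lim filterlim_compose[OF lim filterlim_Suc])
  hence "d = 0" unfolding dconst by (simp add: LIMSEQ_const_iff)
  hence rec: "P (Suc i) = (c1 / c3) * P i" for i using dconst[of i] c3 by (simp add: field_simps)
  have "P i = (c1/c3)^i" by (induction i) (simp_all add: P0 rec)
  thus ?thesis unfolding P_def c1_def c3_def .
qed



lemma stat_mean:
  assumes a: "0 \<le> a" "a < \<mu>" "\<mu> \<le> 1" and st: "stationary_genie a \<mu> \<pi>"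
  shows "(\<integral>\<^sup>+x. ennreal (real x) \<partial>\<pi>) = ennreal (\<Sum>i. (a*(1-\<mu>)/((1-a)*\<mu>))^Suc i)"
    and "summable (\<lambda>i. (a*(1-\<mu>)/((1-a)*\<mu>))^Suc i)"
proof -
  define r where "r = a*(1-\<mu>)/((1-a)*\<mu>)"
  have r0: "0 \<le> r" unfolding r_def using a by auto
  have "a*(1-\<mu>) < (1-a)*\<mu>" using a by (simp add: algebra_simps)
  hence r1: "r < 1" unfolding r_def using a by (simp add: divide_less_eq)
  have sm: "summable (\<lambda>i. r^Suc i)"
    using summable_mult[OF summable_geometric[of r], of r] r0 r1 by simp
  show "summable (\<lambda>i. (a*(1-\<mu>)/((1-a)*\<mu>))^Suc i)" using sm unfolding r_def .
  have "(\<integral>\<^sup>+x. ennreal (real x) \<partial>\<pi>) = (\<Sum>i. \<integral>\<^sup>+x. of_bool (Suc i \<le> x) \<partial>\<pi>)"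
    using tailsum[of \<pi> "\<lambda>x. x"] by simp
  also have "\<dots> = (\<Sum>i. ennreal (r^Suc i))"
    unfolding of_bool_prob stat_tail[OF a st] r_def ..
  also have "\<dots> = ennreal (\<Sum>i. r^Suc i)" using sm r0 by (intro suminf_ennreal2) auto
  finally show "(\<integral>\<^sup>+x. ennreal (real x) \<partial>\<pi>) = ennreal (\<Sum>i. (a*(1-\<mu>)/((1-a)*\<mu>))^Suc i)"
    unfolding r_def .
qed

lemma stat_tail_eq:
  assumes a: "0 \<le> a" "a \<le> 1" "0 \<le> \<mu>" "\<mu> \<le> 1" and st: "stationary_genie a \<mu> \<pi>"
  shows "(\<integral>\<^sup>+x. of_bool (Suc i \<le> x) \<partial>\<pi>) =
     (\<integral>\<^sup>+x. of_bool (i \<le> x) \<partial>\<pi>) * ennreal (a*(1-\<mu>)) + (\<integral>\<^sup>+x. of_bool (Suc i \<le> x) \<partial>\<pi>) * ennreal (a*\<mu> + (1-a)*(1-\<mu>))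
       + (\<integral>\<^sup>+x. of_bool (Suc (Suc i) \<le> x) \<partial>\<pi>) * ennreal ((1-a)*\<mu>)"
proof -
  have "(\<integral>\<^sup>+x. of_bool (Suc i \<le> x) \<partial>\<pi>) = (\<integral>\<^sup>+x. of_bool (Suc i \<le> x) \<partial>bind_pmf \<pi> (genie_step a \<mu>))"
    using st unfolding stationary_genie_def by simp
  also have "\<dots> = (\<integral>\<^sup>+y. of_bool (i \<le> y) * ennreal (a*(1-\<mu>)) + of_bool (Suc i \<le> y) * ennreal (a*\<mu> + (1-a)*(1-\<mu>))
        + of_bool (Suc (Suc i) \<le> y) * ennreal ((1-a)*\<mu>) \<partial>\<pi>)"
    unfolding nn_integral_bind_pmf
    by (rule nn_integral_cong) (rule tail_eq[OF a])
  finally show ?thesis unfolding tail_int[where f="\<lambda>x. x"] .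
qed

lemma cfun_int:
  fixes X :: "'a pmf" and f :: "'a \<Rightarrow> nat"
  assumes a: "0 \<le> a" "a \<le> 1" "0 \<le> \<mu>" "\<mu> \<le> 1"
  shows "(\<integral>\<^sup>+x. ennreal (cfun a \<mu> (f x)) \<partial>X) = ennreal (a*(1-\<mu>)) +
     (\<integral>\<^sup>+x. of_bool (1 \<le> f x) \<partial>X) * ennreal (1 - (1-a)*\<mu>) +
     (\<Sum>i. \<integral>\<^sup>+x. of_bool (Suc (Suc i) \<le> f x) \<partial>X)"
proof -
  have "(\<integral>\<^sup>+x. ennreal (cfun a \<mu> (f x)) \<partial>X) = (\<integral>\<^sup>+x. ennreal (a*(1-\<mu>)) + of_bool (1 \<le> f x) * ennreal (1 - (1-a)*\<mu>)
     + ennreal (real (f x - 1)) \<partial>X)"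
    unfolding cfun_split[OF a] ..
  also have "\<dots> = ennreal (a*(1-\<mu>)) + (\<integral>\<^sup>+x. of_bool (1 \<le> f x) \<partial>X) * ennreal (1 - (1-a)*\<mu>) +
     (\<integral>\<^sup>+x. ennreal (real (f x - 1)) \<partial>X)"
    using nn_integral_add[of "\<lambda>x. ennreal (a*(1-\<mu>)) + of_bool (1 \<le> f x) * ennreal (1 - (1-a)*\<mu>)" "measure_pmf X"
          "\<lambda>x. ennreal (real (f x - 1))"]
      nn_integral_add[of "\<lambda>x. ennreal (a*(1-\<mu>))" "measure_pmf X" "\<lambda>x. of_bool (1 \<le> f x) * ennreal (1 - (1-a)*\<mu>)"]
    by (simp add: nn_integral_multc measure_pmf.emeasure_space_1)
  also have "(\<integral>\<^sup>+x. ennreal (real (f x - 1)) \<partial>X) = (\<Sum>i. \<integral>\<^sup>+x. of_bool (Suc (Suc i) \<le> f x) \<partial>X)"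
    unfolding tailsum by (intro suminf_cong nn_integral_cong) auto
  finally show ?thesis .
qed



theorem lemma11:
  fixes U K :: nat and lam :: "nat \<Rightarrow> real" and mu :: "nat \<Rightarrow> nat \<Rightarrow> real"
    and kstar :: "nat \<Rightarrow> nat" and pol :: policy
    and init :: "((nat \<Rightarrow> nat) \<times> (nat \<Rightarrow> nat)) pmf"
    and u t :: nat
  assumes "1 \<le> U" and "U \<le> K"
    and "\<And>v. v < U \<Longrightarrow> 0 \<le> lam v \<and> lam v \<le> 1"
    and "\<And>v k. v < U \<Longrightarrow> k < K \<Longrightarrow> 0 \<le> mu v k \<and> mu v k \<le> 1"
    and "\<And>v. v < U \<Longrightarrow> kstar v < K"
    and "\<And>v k. v < U \<Longrightarrow> k < K \<Longrightarrow> k \<noteq> kstar v \<Longrightarrow> mu v k < mu v (kstar v)"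
    and "inj_on kstar {..<U}"
    and "\<And>v. v < U \<Longrightarrow> lam v < mu v (kstar v)"
    and "\<And>h. set_pmf (pol h) \<subseteq> matchings U K"
    and "\<And>v. v < U \<Longrightarrow>
           stationary_genie (lam v) (mu v (kstar v)) (map_pmf (\<lambda>p. fst p v) init)"
    and "\<And>v. v < U \<Longrightarrow>
           stationary_genie (lam v) (mu v (kstar v)) (map_pmf (\<lambda>p. snd p v) init)"
    and "u < U" and "1 \<le> t"
  shows "Psi U K lam mu kstar pol init u t \<ge>
           lam u * (\<Sum>k\<in>{..<K} - {kstar u}.
              (mu u (kstar u) - mu u k) *
              measure_pmf.prob (sys U K lam mu kstar pol init t) {st. kappa st u = Some k})"
proof -
  have uU: "u < U" by fact
  define a where "a = lam u"
  define \<mu> where "\<mu> = mu u (kstar u)"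
  define M where "M s = sys U K lam mu kstar pol init s" for s
  define Q where "Q st = fst (snd st) u" for st :: state
  define \<pi>F where "\<pi>F = map_pmf (\<lambda>p. fst p u) init"
  define \<pi>S where "\<pi>S = map_pmf (\<lambda>p. snd p u) init"
  have a: "0 \<le> a" "a \<le> 1" using assms(3)[OF uU] unfolding a_def by auto
  have ks: "kstar u < K" using assms(5)[OF uU] .
  have mu1: "0 \<le> \<mu>" "\<mu> \<le> 1" using assms(4)[OF uU ks] unfolding \<mu>_def by auto
  have amu: "a < \<mu>" using assms(8)[OF uU] unfolding a_def \<mu>_def .
  have stF: "stationary_genie a \<mu> \<pi>F" using assms(10)[OF uU] unfolding a_def \<mu>_def \<pi>F_def .
  have stS: "stationary_genie a \<mu> \<pi>S" using assms(11)[OF uU] unfolding a_def \<mu>_def \<pi>S_def .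
  have mr: "0 \<le> mrate mu u \<kappa> \<and> mrate mu u \<kappa> \<le> \<mu>" if "\<kappa> \<in> set_pmf (pol h)" for \<kappa> h
  proof (cases "\<kappa> u")
    case None thus ?thesis using mu1 by (simp add: mrate_def)
  next
    case (Some k)
    with that assms(9)[of h] have kK: "k < K" by (auto simp: matchings_def)
    show ?thesis
    proof (cases "k = kstar u")
      case True thus ?thesis using Some mu1 by (simp add: mrate_def \<mu>_def)
    next
      case False thus ?thesis using Some assms(4)[OF uU kK] assms(6)[OF uU kK]
        by (simp add: mrate_def \<mu>_def)
    qed
  qed
  have Msuc: "M (Suc s) = bind_pmf (M s) (sys_step U K lam mu kstar pol)" for s
    by (simp add: M_def)
  have STEPQ: "(\<integral>\<^sup>+st. F (kappa st u) (Q st) \<partial>M (Suc s)) =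
     (\<integral>\<^sup>+st. \<integral>\<^sup>+\<kappa>. \<integral>\<^sup>+n. F (\<kappa> u) n \<partial>genie_step a (mrate mu u \<kappa>) (Q st) \<partial>pol (fst st) \<partial>M s)" for F s
    unfolding Msuc nn_integral_bind_pmf
  proof (rule nn_integral_cong)
    fix st
    have "(\<integral>\<^sup>+st'. F (kappa st' u) (Q st') \<partial>sys_step U K lam mu kstar pol st) =
      (\<integral>\<^sup>+x. F (fst x) (snd x) \<partial>map_pmf (\<lambda>st'. (kappa st' u, fst (snd st') u)) (sys_step U K lam mu kstar pol st))"
      by (simp add: Q_def)
    also have "\<dots> = (\<integral>\<^sup>+\<kappa>. \<integral>\<^sup>+n. F (\<kappa> u) n \<partial>genie_step a (mrate mu u \<kappa>) (Q st) \<partial>pol (fst st))"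
      unfolding step_marg_q[where pol=pol and st=st, OF uU assms(9)[of "fst st"]] by (simp add: a_def Q_def)
    finally show "(\<integral>\<^sup>+st'. F (kappa st' u) (Q st') \<partial>sys_step U K lam mu kstar pol st) =
      (\<integral>\<^sup>+\<kappa>. \<integral>\<^sup>+n. F (\<kappa> u) n \<partial>genie_step a (mrate mu u \<kappa>) (Q st) \<partial>pol (fst st))" .
  qed
  have QS: "map_pmf (\<lambda>st. snd (snd st) u) (M s) = \<pi>S" for s
  proof (induction s)
    case 0 thus ?case by (simp add: M_def \<pi>S_def map_pmf_comp case_prod_beta)
  next
    case (Suc s)
    have "map_pmf (\<lambda>st. snd (snd st) u) (M (Suc s)) =
        bind_pmf (M s) (\<lambda>st. genie_step a \<mu> (snd (snd st) u))"
      unfolding Msuc map_bind_pmf step_marg_qs[where kstar=kstar and K=K, OF uU ks] a_def \<mu>_def ..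
    also have "\<dots> = bind_pmf (map_pmf (\<lambda>st. snd (snd st) u) (M s)) (genie_step a \<mu>)"
      by (simp add: bind_map_pmf)
    also have "\<dots> = \<pi>S" using Suc stS by (simp add: stationary_genie_def)
    finally show ?case .
  qed
  have Q0: "map_pmf Q (M 0) = \<pi>F"
    by (simp add: M_def \<pi>F_def Q_def map_pmf_comp case_prod_beta)
  define T where "T s i = (\<integral>\<^sup>+st. of_bool (i \<le> Q st) \<partial>M s)" for s i
  define \<tau> where "\<tau> i = (\<integral>\<^sup>+x. of_bool (i \<le> x) \<partial>\<pi>F)" for i
  have mrm: "0 \<le> mrate mu u \<kappa>" "mrate mu u \<kappa> \<le> \<mu>" "mrate mu u \<kappa> \<le> 1"
    if "\<kappa> \<in> set_pmf (pol h)" for \<kappa> h using mr[OF that] mu1 by auto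
  have DOM: "\<tau> i \<le> T s i" for s i
  proof (induction s arbitrary: i)
    case 0
    have "T 0 i = (\<integral>\<^sup>+x. of_bool (i \<le> x) \<partial>map_pmf Q (M 0))" unfolding T_def by simp
    thus ?case unfolding Q0 \<tau>_def by simp
  next
    case (Suc s)
    show ?case
    proof (cases i)
      case 0 thus ?thesis unfolding T_def \<tau>_def by (simp add: measure_pmf.emeasure_space_1)
    next
      case (Suc j)
      define R where "R q = of_bool (j \<le> q) * ennreal (a*(1-\<mu>)) + of_bool (Suc j \<le> q) * ennreal (a*\<mu> + (1-a)*(1-\<mu>))
         + of_bool (Suc (Suc j) \<le> q) * ennreal ((1-a)*\<mu>)" for q :: nat
      have "\<tau> i = \<tau> j * ennreal (a*(1-\<mu>)) + \<tau> (Suc j) * ennreal (a*\<mu> + (1-a)*(1-\<mu>))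
         + \<tau> (Suc (Suc j)) * ennreal ((1-a)*\<mu>)"
        unfolding \<tau>_def Suc using stat_tail_eq[OF a mu1 stF, of j] by simp
      also have "\<dots> \<le> T s j * ennreal (a*(1-\<mu>)) + T s (Suc j) * ennreal (a*\<mu> + (1-a)*(1-\<mu>))
         + T s (Suc (Suc j)) * ennreal ((1-a)*\<mu>)"
        by (intro add_mono mult_right_mono Suc.IH) auto
      also have "\<dots> = (\<integral>\<^sup>+st. R (Q st) \<partial>M s)"
        unfolding R_def T_def by (rule tail_int[symmetric])
      also have "\<dots> = (\<integral>\<^sup>+st. \<integral>\<^sup>+\<kappa>. R (Q st) \<partial>pol (fst st) \<partial>M s)"
        by (simp add: measure_pmf.emeasure_space_1)
      also have "\<dots> \<le> (\<integral>\<^sup>+st. \<integral>\<^sup>+\<kappa>. \<integral>\<^sup>+n. of_bool (Suc j \<le> n) \<partial>genie_step a (mrate mu u \<kappa>) (Q st) \<partial>pol (fst st) \<partial>M s)"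
        unfolding R_def
      proof (rule nn_integral_mono, rule nn_integral_mono_AE, rule AE_pmfI)
        fix st :: state and \<kappa> assume "\<kappa> \<in> set_pmf (pol (fst st))"
        from mrm[OF this] show "of_bool (j \<le> Q st) * ennreal (a*(1-\<mu>)) + of_bool (Suc j \<le> Q st) * ennreal (a*\<mu> + (1-a)*(1-\<mu>))
         + of_bool (Suc (Suc j) \<le> Q st) * ennreal ((1-a)*\<mu>)
          \<le> (\<integral>\<^sup>+n. of_bool (Suc j \<le> n) \<partial>genie_step a (mrate mu u \<kappa>) (Q st))"
          using tail_pt[OF a _ _ mu1(2)] by blast
      qed
      also have "\<dots> = T (Suc s) i"
        unfolding T_def Suc using STEPQ[where F="\<lambda>_ n. of_bool (Suc j \<le> n)" and s=s] by simp
      finally show ?thesis .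
    qed
  qed
  have mean_pt: "(\<integral>\<^sup>+n. ennreal (real n) \<partial>genie_step a (mrate mu u \<kappa>) q) = ennreal (cfun a (mrate mu u \<kappa>) q)"
    if "\<kappa> \<in> set_pmf (pol h)" for \<kappa> h q using mrm[OF that] by (intro mean_val a) auto
  have MEANFIN: "(\<integral>\<^sup>+st. ennreal (real (Q st)) \<partial>M s) \<le> (\<integral>\<^sup>+x. ennreal (real x) \<partial>\<pi>F) + of_nat s" for s
  proof (induction s)
    case 0
    have "(\<integral>\<^sup>+st. ennreal (real (Q st)) \<partial>M 0) = (\<integral>\<^sup>+x. ennreal (real x) \<partial>map_pmf Q (M 0))" by simp
    thus ?case unfolding Q0 by simp
  next
    case (Suc s)
    have "(\<integral>\<^sup>+st. ennreal (real (Q st)) \<partial>M (Suc s)) =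
      (\<integral>\<^sup>+st. \<integral>\<^sup>+\<kappa>. \<integral>\<^sup>+n. ennreal (real n) \<partial>genie_step a (mrate mu u \<kappa>) (Q st) \<partial>pol (fst st) \<partial>M s)"
      using STEPQ[where F="\<lambda>_ n. ennreal (real n)" and s=s] by simp
    also have "\<dots> \<le> (\<integral>\<^sup>+st. \<integral>\<^sup>+\<kappa>. ennreal (real (Q st)) + 1 \<partial>pol (fst st) \<partial>M s)"
    proof (rule nn_integral_mono, rule nn_integral_mono_AE, rule AE_pmfI)
      fix st :: state and \<kappa> assume k: "\<kappa> \<in> set_pmf (pol (fst st))"
      have "cfun a (mrate mu u \<kappa>) (Q st) \<le> real (Q st) + 1"
        using mrm[OF k] by (intro cfun_le a) auto
      moreover have "ennreal (real (Q st)) + 1 = ennreal (real (Q st) + 1)" by simp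
      ultimately have "ennreal (cfun a (mrate mu u \<kappa>) (Q st)) \<le> ennreal (real (Q st)) + 1"
        by (metis ennreal_leI)
      thus "(\<integral>\<^sup>+n. ennreal (real n) \<partial>genie_step a (mrate mu u \<kappa>) (Q st)) \<le> ennreal (real (Q st)) + 1"
        unfolding mean_pt[OF k] .
    qed
    also have "\<dots> = (\<integral>\<^sup>+st. ennreal (real (Q st)) \<partial>M s) + 1"
      by (simp add: measure_pmf.emeasure_space_1 nn_integral_add)
    also have "\<dots> \<le> (\<integral>\<^sup>+x. ennreal (real x) \<partial>\<pi>F) + of_nat s + 1"
      using Suc.IH by (intro add_right_mono)
    finally show ?case by (simp add: add.assoc add.commute)
  qed
  obtain s where ts: "t = Suc s" using assms(13) by (cases t) auto
  define Kset where "Kset = {..<K} - {kstar u}"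
  define D where "D k = ennreal (a * (\<mu> - mu u k))" for k
  define pr where "pr k = measure_pmf.prob (M t) {st. kappa st u = Some k}" for k
  define P where "P k = (\<integral>\<^sup>+st. of_bool (kappa st u = Some k) \<partial>M t)" for k
  have Dnn: "0 \<le> a * (\<mu> - mu u k)" if "k \<in> Kset" for k
    using that assms(6)[OF uU, of k] a unfolding Kset_def \<mu>_def by auto
  have Peq: "P k = (\<integral>\<^sup>+st. \<integral>\<^sup>+\<kappa>. of_bool (\<kappa> u = Some k) \<partial>pol (fst st) \<partial>M s)" for k
    unfolding P_def ts using STEPQ[where F="\<lambda>ko n. of_bool (ko = Some k)" and s=s]
    by (simp add: measure_pmf.emeasure_space_1)
  have PS: "(\<Sum>k\<in>Kset. D k * of_bool (\<kappa> u = Some k)) \<le> ennreal (a * (\<mu> - mrate mu u \<kappa>))"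
    if k: "\<kappa> \<in> set_pmf (pol h)" for \<kappa> h
  proof (cases "\<kappa> u")
    case None thus ?thesis by simp
  next
    case (Some k0)
    have "(\<Sum>k\<in>Kset. D k * of_bool (\<kappa> u = Some k)) = (\<Sum>k\<in>Kset. if k0 = k then D k else 0)"
      using Some by (intro sum.cong) auto
    also have "\<dots> = (if k0 \<in> Kset then D k0 else 0)" by (simp add: Kset_def)
    also have "\<dots> \<le> ennreal (a * (\<mu> - mrate mu u \<kappa>))"
      using Some by (auto simp: D_def mrate_def)
    finally show ?thesis .
  qed
  have sumP: "(\<integral>\<^sup>+st. \<integral>\<^sup>+\<kappa>. (\<Sum>k\<in>Kset. D k * of_bool (\<kappa> u = Some k)) \<partial>pol (fst st) \<partial>M s) = (\<Sum>k\<in>Kset. D k * P k)"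
    by (simp add: nn_integral_sum nn_integral_cmult Peq)
  have LB1: "(\<integral>\<^sup>+st. ennreal (cfun a \<mu> (Q st)) \<partial>M s) + (\<Sum>k\<in>Kset. D k * P k) \<le> (\<integral>\<^sup>+st. ennreal (real (Q st)) \<partial>M t)"
  proof -
    have "(\<integral>\<^sup>+st. ennreal (cfun a \<mu> (Q st)) \<partial>M s) + (\<Sum>k\<in>Kset. D k * P k) =
      (\<integral>\<^sup>+st. \<integral>\<^sup>+\<kappa>. ennreal (cfun a \<mu> (Q st)) + (\<Sum>k\<in>Kset. D k * of_bool (\<kappa> u = Some k)) \<partial>pol (fst st) \<partial>M s)"
      unfolding sumP[symmetric] by (simp add: nn_integral_add measure_pmf.emeasure_space_1)
    also have "\<dots> \<le> (\<integral>\<^sup>+st. \<integral>\<^sup>+\<kappa>. \<integral>\<^sup>+n. ennreal (real n) \<partial>genie_step a (mrate mu u \<kappa>) (Q st) \<partial>pol (fst st) \<partial>M s)"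
    proof (rule nn_integral_mono, rule nn_integral_mono_AE, rule AE_pmfI)
      fix st :: state and \<kappa> assume k: "\<kappa> \<in> set_pmf (pol (fst st))"
      have c: "cfun a \<mu> (Q st) + a * (\<mu> - mrate mu u \<kappa>) \<le> cfun a (mrate mu u \<kappa>) (Q st)"
        using mrm[OF k] by (intro cfun_ge a mu1) auto
      have nn: "0 \<le> cfun a \<mu> (Q st)" "0 \<le> a * (\<mu> - mrate mu u \<kappa>)"
        using mrm[OF k] a mu1 by (auto intro: cfun_nonneg)
      have "ennreal (cfun a \<mu> (Q st)) + (\<Sum>k\<in>Kset. D k * of_bool (\<kappa> u = Some k))
          \<le> ennreal (cfun a \<mu> (Q st)) + ennreal (a * (\<mu> - mrate mu u \<kappa>))"
        using PS[OF k] by (rule add_left_mono)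
      also have "\<dots> = ennreal (cfun a \<mu> (Q st) + a * (\<mu> - mrate mu u \<kappa>))" using nn by simp
      also have "\<dots> \<le> ennreal (cfun a (mrate mu u \<kappa>) (Q st))" using c by (rule ennreal_leI)
      finally show "ennreal (cfun a \<mu> (Q st)) + (\<Sum>k\<in>Kset. D k * of_bool (\<kappa> u = Some k))
          \<le> (\<integral>\<^sup>+n. ennreal (real n) \<partial>genie_step a (mrate mu u \<kappa>) (Q st))"
        unfolding mean_pt[OF k] .
    qed
    also have "\<dots> = (\<integral>\<^sup>+st. ennreal (real (Q st)) \<partial>M t)"
      unfolding ts using STEPQ[where F="\<lambda>_ n. ennreal (real n)" and s=s] by simp
    finally show ?thesis .
  qed
  have LB2: "(\<integral>\<^sup>+x. ennreal (real x) \<partial>\<pi>F) \<le> (\<integral>\<^sup>+st. ennreal (cfun a \<mu> (Q st)) \<partial>M s)"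
  proof -
    have "(\<integral>\<^sup>+x. ennreal (real x) \<partial>\<pi>F) = (\<integral>\<^sup>+x. ennreal (real x) \<partial>bind_pmf \<pi>F (genie_step a \<mu>))"
      using stF unfolding stationary_genie_def by simp
    also have "\<dots> = (\<integral>\<^sup>+x. ennreal (cfun a \<mu> x) \<partial>\<pi>F)"
      unfolding nn_integral_bind_pmf by (intro nn_integral_cong mean_val a mu1)
    also have "\<dots> = ennreal (a*(1-\<mu>)) + \<tau> 1 * ennreal (1 - (1-a)*\<mu>) + (\<Sum>i. \<tau> (Suc (Suc i)))"
      unfolding \<tau>_def using cfun_int[OF a mu1, where f="\<lambda>x. x" and X=\<pi>F] by simp
    also have "\<dots> \<le> ennreal (a*(1-\<mu>)) + T s 1 * ennreal (1 - (1-a)*\<mu>) + (\<Sum>i. T s (Suc (Suc i)))"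
      by (intro add_mono mult_right_mono ennreal_suminf_mono DOM order_refl) auto
    also have "\<dots> = (\<integral>\<^sup>+st. ennreal (cfun a \<mu> (Q st)) \<partial>M s)"
      unfolding T_def using cfun_int[OF a mu1, where f=Q and X="M s"] by simp
    finally show ?thesis .
  qed
  define \<sigma> where "\<sigma> = (\<Sum>i. (a*(1-\<mu>)/((1-a)*\<mu>))^Suc i)"
  have EF: "(\<integral>\<^sup>+x. ennreal (real x) \<partial>\<pi>F) = ennreal \<sigma>"
    unfolding \<sigma>_def using stat_mean(1)[OF a(1) amu mu1(2) stF] .
  have ES: "(\<integral>\<^sup>+x. ennreal (real x) \<partial>\<pi>S) = ennreal \<sigma>"
    unfolding \<sigma>_def using stat_mean(1)[OF a(1) amu mu1(2) stS] .
  have \<sigma>0: "0 \<le> \<sigma>" unfolding \<sigma>_def using a amu mu1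
    by (intro suminf_nonneg stat_mean(2)[OF a(1) amu mu1(2) stS]) auto
  define L where "L = (\<integral>\<^sup>+st. ennreal (real (Q st)) \<partial>M t)"
  have "L \<le> ennreal (\<sigma> + real t)" using MEANFIN[of t] unfolding L_def EF
    by (simp add: ennreal_of_nat_eq_real_of_nat \<sigma>0)
  hence Lfin: "L < top" using ennreal_less_top[of "\<sigma> + real t"] by (rule order_le_less_trans)
  have Pk: "P k = ennreal (pr k)" for k unfolding P_def pr_def by (rule of_bool_prob)
  have prnn: "0 \<le> pr k" for k unfolding pr_def by simp
  have sumeq: "(\<Sum>k\<in>Kset. D k * P k) = ennreal (\<Sum>k\<in>Kset. a * (\<mu> - mu u k) * pr k)"
  proof -
    have "(\<Sum>k\<in>Kset. D k * P k) = (\<Sum>k\<in>Kset. ennreal (a * (\<mu> - mu u k) * pr k))"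
      unfolding D_def Pk by (intro sum.cong refl) (simp add: ennreal_mult Dnn prnn)
    also have "\<dots> = ennreal (\<Sum>k\<in>Kset. a * (\<mu> - mu u k) * pr k)"
      by (intro sum_ennreal) (simp add: Dnn prnn)
    finally show ?thesis .
  qed
  define S where "S = (\<Sum>k\<in>Kset. a * (\<mu> - mu u k) * pr k)"
  have S0: "0 \<le> S" unfolding S_def by (intro sum_nonneg mult_nonneg_nonneg Dnn prnn)
  have "ennreal (\<sigma> + S) = ennreal \<sigma> + ennreal S" using \<sigma>0 S0 by simp
  also have "\<dots> \<le> (\<integral>\<^sup>+st. ennreal (cfun a \<mu> (Q st)) \<partial>M s) + ennreal S"
    using LB2 unfolding EF by (rule add_right_mono)
  also have "\<dots> \<le> L" using LB1 unfolding sumeq S_def[symmetric] L_def .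
  finally have "enn2real (ennreal (\<sigma> + S)) \<le> enn2real L" using Lfin by (intro enn2real_mono) auto
  hence LB: "\<sigma> + S \<le> enn2real L" using \<sigma>0 S0 by (simp del: ennreal_plus)
  have intQ: "integrable (M t) (\<lambda>st. real (Q st))"
    by (rule integrableI_nonneg) (use Lfin in \<open>simp_all add: L_def\<close>)
  have nnQS: "(\<integral>\<^sup>+st. ennreal (real (snd (snd st) u)) \<partial>M t) = ennreal \<sigma>"
  proof -
    have "(\<integral>\<^sup>+st. ennreal (real (snd (snd st) u)) \<partial>M t) =
       (\<integral>\<^sup>+x. ennreal (real x) \<partial>map_pmf (\<lambda>st. snd (snd st) u) (M t))" by simp
    thus ?thesis unfolding QS ES .
  qed
  have intQS: "integrable (M t) (\<lambda>st. real (snd (snd st) u))"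
    by (rule integrableI_nonneg) (simp_all add: nnQS)
  have "Psi U K lam mu kstar pol init u t = measure_pmf.expectation (M t) (\<lambda>st. real (Q st) - real (snd (snd st) u))"
  proof -
    have "(\<lambda>(h, q, qs). real (q u) - real (qs u)) = (\<lambda>st::state. real (Q st) - real (snd (snd st) u))"
      by (auto simp: fun_eq_iff Q_def)
    thus ?thesis unfolding Psi_def M_def by simp
  qed
  also have "\<dots> = measure_pmf.expectation (M t) (\<lambda>st. real (Q st)) - measure_pmf.expectation (M t) (\<lambda>st. real (snd (snd st) u))"
    by (rule Bochner_Integration.integral_diff[OF intQ intQS])
  also have "measure_pmf.expectation (M t) (\<lambda>st. real (Q st)) = enn2real L"
    unfolding L_def by (subst integral_eq_nn_integral) auto
  also have "measure_pmf.expectation (M t) (\<lambda>st. real (snd (snd st) u)) = \<sigma>"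
    by (subst integral_eq_nn_integral) (auto simp: nnQS \<sigma>0)
  finally have "Psi U K lam mu kstar pol init u t \<ge> S" using LB by simp
  moreover have "S = lam u * (\<Sum>k\<in>{..<K} - {kstar u}.
              (mu u (kstar u) - mu u k) *
              measure_pmf.prob (sys U K lam mu kstar pol init t) {st. kappa st u = Some k})"
    unfolding S_def Kset_def a_def \<mu>_def pr_def M_def by (simp add: sum_distrib_left mult.assoc)
  ultimately show ?thesis by simp
qed


end
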